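(* Let $f\in\mathbb{Z}[X]$ be a monic polynomial irreducible over $\mathbb{Q}$. Then every Vandermonde cut-and-project scheme corresponding to $f$ is generic.
   Context: Let $f$ have degree $d$ and (distinct) roots $\beta_1,\dots,\beta_d$, and set $\mathbf{z}_j=(1,\beta_j,\beta_j^2,\dots,\beta_j^{d-1})^\top$. The elementary real subspaces are $\mathrm{span}_\mathbb{R}\{\mathbf{z}_j\}$ for real $\beta_j$ and $\mathrm{span}_\mathbb{R}\{\mathrm{Re}\,\mathbf{z}_j,\mathrm{Im}\,\mathbf{z}_j\}$ for non-real $\beta_j$ (real and imaginary parts taken componentwise). A Vandermonde cut-and-project scheme corresponding to $f$ is obtained as follows: write $\mathbb{R}^d=\mathcal{Y}_1\oplus\mathcal{Y}_2$ where each $\mathcal{Y}_i$ is a direct sum of some of the elementary subspaces, $\dim\mathcal{Y}_1=n$, $1\le n<d$; let $Y_1\in\mathbb{R}^{d\times n}$, $Y_2\in\mathbb{R}^{d\times(d-n)}$ be matrices whose columns are the corresponding vectors $\mathbf{z}_j$ or pairs $\mathrm{Re}\,\mathbf{z}_j,\mathrm{Im}\,\mathbf{z}_j$ spanning $\mathcal{Y}_1$, $\mathcal{Y}_2$; set $Y=(Y_1,Y_2)$, $L=Y^{-1}$ and $\mathcal{L}=\{L\mathbf{r}:\mathbf{r}\in\mathbb{Z}^d\}$. The scheme is $(\mathcal{L}\subset\mathbb{R}^d,\mathbb{R}^n)$ with projections $\pi_\parallel(\mathbf{x})=(x_1,\dots,x_n)^\top$, $\pi_\perp(\mathbf{x})=(x_{n+1},\dots,x_d)^\top$.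 Such a scheme is generic if $\pi_\parallel|_{\mathcal{L}}$ and $\pi_\perp|_{\mathcal{L}}$ are injective and $\pi_\perp(\mathcal{L})$ is dense in $\mathbb{R}^{d-n}$. *)

theory Defs
  imports Complex_Main "HOL-Computational_Algebra.Polynomial"
begin

text \<open>Column data of a Vandermonde matrix Y = (Y1, Y2) for f with dim Y1 = n.
  Column k (k < degree f) is Re(z(col k)) if part k is False, and Im(z(col k)) if part k is True,
  where z(b) = (1, b, ..., b^(d-1)).\<close>
definition vdm_columns :: "int poly \<Rightarrow> nat \<Rightarrow> (nat \<Rightarrow> complex) \<Rightarrow> (nat \<Rightarrow> bool) \<Rightarrow> bool" where
  "vdm_columns f n col part \<longleftrightarrow>
     (\<forall>k < degree f. poly (map_poly complex_of_int f) (col k) = 0) \<and>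
     (\<forall>\<gamma>. poly (map_poly complex_of_int f) \<gamma> = 0 \<longrightarrow> Im \<gamma> = 0 \<longrightarrow>
        card {k. k < degree f \<and> col k = \<gamma>} = 1 \<and>
        (\<forall>k < degree f. col k = \<gamma> \<longrightarrow> \<not> part k)) \<and>
     (\<forall>\<gamma>. poly (map_poly complex_of_int f) \<gamma> = 0 \<longrightarrow> Im \<gamma> \<noteq> 0 \<longrightarrow>
        (\<exists>k1 k2. k1 < degree f \<and> k2 < degree f \<and> k1 \<noteq> k2 \<and>
           {k. k < degree f \<and> (col k = \<gamma> \<or> col k = cnj \<gamma>)} = {k1, k2} \<and>
           col k1 = col k2 \<and> part k1 \<noteq> part k2 \<and> (k1 < n \<longleftrightarrow> k2 < n)))"

definition vdm_matrix :: "(nat \<Rightarrow> complex) \<Rightarrow> (nat \<Rightarrow> bool) \<Rightarrow> nat \<Rightarrow> nat \<Rightarrow> real" where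
  "vdm_matrix col part i k = (if part k then Im (col k ^ i) else Re (col k ^ i))"

text \<open>The lattice L Z^d, vectors of R^d as functions nat => real vanishing from index d on.\<close>
definition cps_lattice :: "nat \<Rightarrow> (nat \<Rightarrow> nat \<Rightarrow> real) \<Rightarrow> (nat \<Rightarrow> real) set" where
  "cps_lattice d L = {x. \<exists>r :: nat \<Rightarrow> int.
      x = (\<lambda>i. if i < d then (\<Sum>k<d. L i k * of_int (r k)) else 0)}"

definition pi_par :: "nat \<Rightarrow> (nat \<Rightarrow> real) \<Rightarrow> (nat \<Rightarrow> real)" where
  "pi_par n x = (\<lambda>i. if i < n then x i else 0)"

definition pi_perp :: "nat \<Rightarrow> nat \<Rightarrow> (nat \<Rightarrow> real) \<Rightarrow> (nat \<Rightarrow> real)" where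
  "pi_perp d n x = (\<lambda>i. if i < d - n then x (n + i) else 0)"

definition generic_cps :: "nat \<Rightarrow> nat \<Rightarrow> (nat \<Rightarrow> nat \<Rightarrow> real) \<Rightarrow> bool" where
  "generic_cps d n L \<longleftrightarrow>
     inj_on (pi_par n) (cps_lattice d L) \<and>
     inj_on (pi_perp d n) (cps_lattice d L) \<and>
     (\<forall>y :: nat \<Rightarrow> real. \<forall>\<epsilon> > 0. \<exists>x \<in> cps_lattice d L.
        sqrt (\<Sum>i < d - n. (pi_perp d n x i - y i)^2) < \<epsilon>)"

end

theory Submission imports Defs "HOL-Analysis.Analysis" "HOL-Computational_Algebra.Polynomial_Factorial" "HOL-Computational_Algebra.Field_as_Ring" begin

lemma map_poly_of_rat_add: "map_poly (of_rat :: rat \<Rightarrow> complex) (p + q) = map_poly of_rat p + map_poly of_rat q"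
  by (rule poly_eqI) (simp add: coeff_map_poly of_rat_add)

lemma map_poly_of_rat_mult: "map_poly (of_rat :: rat \<Rightarrow> complex) (p * q) = map_poly of_rat p * map_poly of_rat q"
  by (rule poly_eqI) (simp add: coeff_map_poly coeff_mult of_rat_sum of_rat_mult)

lemma lemmaA:
  fixes f :: "int poly" and \<beta> :: complex and a :: "nat \<Rightarrow> int"
  assumes irr: "irreducible (map_poly (of_int::int\<Rightarrow>rat) f)"
    and root: "poly (map_poly complex_of_int f) \<beta> = 0"
    and sum0: "(\<Sum>j<degree f. of_int (a j) * \<beta>^j) = 0"
    and j: "j < degree f"
  shows "a j = 0"
proof -
  define d where "d = degree f"
  define fQ where "fQ = map_poly (of_int::int\<Rightarrow>rat) f"
  define p where "p = (\<Sum>j<d. monom (of_int (a j) :: rat) j)"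
  have coeffp: "coeff p k = (if k < d then of_int (a k) else 0)" for k
    unfolding p_def by (simp add: coeff_sum coeff_monom)
  have degfQ: "degree fQ = d" unfolding fQ_def d_def by (rule degree_map_poly) simp
  have mfQ: "map_poly (of_rat :: rat \<Rightarrow> complex) fQ = map_poly complex_of_int f"
    unfolding fQ_def by (simp add: map_poly_map_poly o_def)
  have mp: "map_poly (of_rat :: rat \<Rightarrow> complex) p = (\<Sum>j<d. monom (of_int (a j)) j)"
    by (rule poly_eqI) (simp add: coeff_map_poly coeffp coeff_sum coeff_monom)
  have evp: "poly (map_poly (of_rat :: rat \<Rightarrow> complex) p) \<beta> = 0"
    unfolding mp using sum0 by (simp add: poly_sum poly_monom d_def)
  have "p = 0"
  proof (rule ccontr)
    assume pnz: "p \<noteq> 0"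
    have degp: "degree p < d"
    proof -
      have "d > 0" using pnz unfolding p_def by (cases d) auto
      moreover have "degree p \<le> d - 1"
        by (rule degree_le) (auto simp add: coeffp)
      ultimately show ?thesis by linarith
    qed
    define g where "g = gcd fQ p"
    have "g dvd fQ" unfolding g_def by simp
    then have "is_unit g \<or> fQ dvd g" using irr irreducibleD' unfolding fQ_def by blast
    then show False
    proof
      assume "fQ dvd g"
      then have "fQ dvd p" unfolding g_def by (meson dvd_trans gcd_dvd2)
      then have "degree fQ \<le> degree p" using pnz by (simp add: dvd_imp_degree_le)
      then show False using degp degfQ by simp
    next
      assume u: "is_unit g"
      obtain x y where xy: "x * fQ + y * p = g"
        using bezout_coefficients_fst_snd unfolding g_def by blast
      have e: "map_poly (of_rat :: rat \<Rightarrow> complex) g = map_poly of_rat x * map_poly complex_of_int f + map_poly of_rat y * map_poly of_rat p"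
        using xy[symmetric] by (simp add: map_poly_of_rat_add map_poly_of_rat_mult mfQ)
      have ev0: "poly (map_poly (of_rat :: rat \<Rightarrow> complex) g) \<beta> = 0"
        unfolding e by (simp add: root evp)
      obtain c where c: "g = [:c:]" "is_unit c" using u
        by (auto simp: is_unit_poly_iff)
      then have "c \<noteq> 0" by auto
      then show False using ev0 c by (simp add: map_poly_pCons)
    qed
  qed
  then have "coeff p j = 0" by simp
  then show ?thesis using coeffp[of j] j unfolding d_def by simp
qed

definition Gc :: "int poly \<Rightarrow> complex \<Rightarrow> nat \<Rightarrow> complex" where
  "Gc f \<beta> i = (\<Sum>j<degree f - i. of_int (coeff f (i+1+j)) * \<beta>^j)"

lemma poly_fC: "poly (map_poly complex_of_int f) x = (\<Sum>k\<le>degree f. of_int (coeff f k) * x^k)"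
proof -
  have "degree (map_poly complex_of_int f) = degree f" by (rule degree_map_poly) simp
  then show ?thesis by (simp add: poly_altdef coeff_map_poly)
qed

lemma Gc_shift:
  assumes "i < degree f"
  shows "Gc f \<beta> i = (\<Sum>k=Suc i..degree f. of_int (coeff f k) * \<beta>^(k - Suc i))"
proof -
  have "(\<Sum>k=Suc i..degree f. of_int (coeff f k) * \<beta>^(k - Suc i))
      = (\<Sum>k=0 + Suc i..(degree f - Suc i) + Suc i. of_int (coeff f k) * \<beta>^(k - Suc i))"
    using assms by simp
  also have "\<dots> = (\<Sum>j=0..degree f - Suc i. of_int (coeff f (j + Suc i)) * \<beta>^j)"
    by (subst sum.shift_bounds_cl_nat_ivl) simp
  also have "{0..degree f - Suc i} = {..<degree f - i}" using assms by auto
  finally show ?thesis unfolding Gc_def by (simp add: add.commute)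
qed

lemma lemmaB:
  assumes rg: "poly (map_poly complex_of_int f) \<gamma> = 0"
    and rb: "poly (map_poly complex_of_int f) \<beta> = 0" and ne: "\<gamma> \<noteq> \<beta>"
  shows "(\<Sum>i<degree f. \<gamma>^i * Gc f \<beta> i) = 0"
proof -
  define d where "d = degree f"
  define c where "c = (\<lambda>k. complex_of_int (coeff f k))"
  have "(\<Sum>i<d. \<gamma>^i * Gc f \<beta> i) = (\<Sum>i<d. \<Sum>k=Suc i..d. c k * \<beta>^(k - Suc i) * \<gamma>^i)"
    by (rule sum.cong) (auto simp: Gc_shift d_def c_def sum_distrib_left mult_ac)
  also have "\<dots> = (\<Sum>k\<le>d. \<Sum>i<k. c k * \<beta>^(k - Suc i) * \<gamma>^i)"
    by (rule sum.nested_swap'[symmetric])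
  also have "\<dots> = (\<Sum>k\<le>d. c k * (\<Sum>i<k. \<beta>^(k - Suc i) * \<gamma>^i))"
    by (simp add: sum_distrib_left mult_ac)
  finally have eq: "(\<Sum>i<d. \<gamma>^i * Gc f \<beta> i) = (\<Sum>k\<le>d. c k * (\<Sum>i<k. \<beta>^(k - Suc i) * \<gamma>^i))" .
  have "(\<gamma> - \<beta>) * (\<Sum>k\<le>d. c k * (\<Sum>i<k. \<beta>^(k - Suc i) * \<gamma>^i))
      = (\<Sum>k\<le>d. c k * (\<gamma>^k - \<beta>^k))"
    by (simp add: sum_distrib_left power_diff_sumr2 mult_ac)
  also have "\<dots> = poly (map_poly complex_of_int f) \<gamma> - poly (map_poly complex_of_int f) \<beta>"
    by (simp add: poly_fC d_def c_def right_diff_distrib sum_subtractf)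
  also have "\<dots> = 0" using rg rb by simp
  finally show ?thesis using ne eq d_def by simp
qed

lemma swap_tri:
  fixes F :: "nat \<Rightarrow> nat \<Rightarrow> 'a::comm_monoid_add"
  shows "(\<Sum>i<d. \<Sum>j<d - i. F i j) = (\<Sum>j<d. \<Sum>i<d - j. F i j)"
proof -
  have "(\<Sum>i<d. \<Sum>j<d - i. F i j) = (\<Sum>i<d. \<Sum>j<d. if i + j < d then F i j else 0)"
    by (rule sum.cong[OF refl], rule sum.mono_neutral_cong_left) auto
  also have "\<dots> = (\<Sum>j<d. \<Sum>i<d. if i + j < d then F i j else 0)"
    by (rule sum.swap)
  also have "\<dots> = (\<Sum>j<d. \<Sum>i<d - j. F i j)"
    by (rule sum.cong[OF refl], rule sum.mono_neutral_cong_right) auto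
  finally show ?thesis .
qed

lemma lemmaC:
  fixes f :: "int poly" and \<sigma> :: "nat \<Rightarrow> int"
  assumes lc: "lead_coeff f = 1"
    and a0: "\<forall>j<degree f. (\<Sum>i<degree f - j. \<sigma> i * coeff f (i+1+j)) = 0"
  shows "\<forall>i<degree f. \<sigma> i = 0"
proof -
  define d where "d = degree f"
  have "\<sigma> i = 0" if "i < d" for i
    using that
  proof (induction i rule: less_induct)
    case (less i)
    have "(\<Sum>i'<d - (d - 1 - i). \<sigma> i' * coeff f (i'+1+(d - 1 - i))) = 0"
    proof -
      have "d - 1 - i < degree f" using less.prems d_def by auto
      then show ?thesis using a0 unfolding d_def by blast
    qed
    moreover have "d - (d - 1 - i) = Suc i" using less.prems by auto
    moreover have "(\<Sum>i'<i. \<sigma> i' * coeff f (i'+1+(d - 1 - i))) = 0"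
      using less.IH less.prems by (intro sum.neutral) auto
    moreover have "i+1+(d - 1 - i) = d" using less.prems by auto
    ultimately show ?case using lc d_def by simp
  qed
  then show ?thesis unfolding d_def by blast
qed

lemma conj_root:
  assumes "poly (map_poly complex_of_int f) \<gamma> = 0"
  shows "poly (map_poly complex_of_int f) (cnj \<gamma>) = 0"
proof -
  have m: "map_poly cnj (map_poly complex_of_int f) = map_poly complex_of_int f"
    by (simp add: map_poly_map_poly o_def)
  have "poly (map_poly complex_of_int f) (cnj \<gamma>) = cnj (poly (map_poly complex_of_int f) \<gamma>)"
    using poly_cnj[of "map_poly complex_of_int f" \<gamma>] m by simp
  then show ?thesis using assms by simp
qed

lemma vdm_complex:
  fixes col :: "nat \<Rightarrow> complex" and part :: "nat \<Rightarrow> bool"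
  shows "complex_of_real (vdm_matrix col part i c) =
     (if part c then ((col c)^i - (cnj (col c))^i) / (2 * \<i>) else ((col c)^i + (cnj (col c))^i) / 2)"
proof -
  have a: "z + cnj z = complex_of_real (2 * Re z)" for z by (rule complex_add_cnj)
  have b: "z - cnj z = complex_of_real (2 * Im z) * \<i>" for z by (rule complex_diff_cnj)
  show ?thesis unfolding vdm_matrix_def
    by (auto simp: a b algebra_simps simp flip: complex_cnj_power)
qed

lemma lemmaD:
  fixes f :: "int poly" and col :: "nat \<Rightarrow> complex" and part :: "nat \<Rightarrow> bool"
    and C :: "nat set" and \<sigma> :: "nat \<Rightarrow> int" and u :: "nat \<Rightarrow> real" and \<beta> :: complex
  assumes lc: "lead_coeff f = 1"
    and irr: "irreducible (map_poly (of_int::int\<Rightarrow>rat) f)"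
    and rb: "poly (map_poly complex_of_int f) \<beta> = 0"
    and C: "C \<subseteq> {..<degree f}"
    and cols: "\<forall>c\<in>C. poly (map_poly complex_of_int f) (col c) = 0 \<and> col c \<noteq> \<beta> \<and> cnj (col c) \<noteq> \<beta>"
    and rep: "\<forall>i<degree f. real_of_int (\<sigma> i) = (\<Sum>c\<in>C. vdm_matrix col part i c * u c)"
  shows "\<forall>i<degree f. \<sigma> i = 0"
proof -
  define d where "d = degree f"
  have fin: "finite C" using C finite_subset by blast
  have colsum: "(\<Sum>i<d. complex_of_real (vdm_matrix col part i c) * Gc f \<beta> i) = 0" if c: "c \<in> C" for c
  proof -
    define \<gamma> where "\<gamma> = col c"
    have r1: "poly (map_poly complex_of_int f) \<gamma> = 0" "\<gamma> \<noteq> \<beta>" "cnj \<gamma> \<noteq> \<beta>"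
      using cols c \<gamma>_def by auto
    have S1: "(\<Sum>i<d. \<gamma>^i * Gc f \<beta> i) = 0" using lemmaB[OF r1(1) rb r1(2)] d_def by simp
    have S2: "(\<Sum>i<d. (cnj \<gamma>)^i * Gc f \<beta> i) = 0"
      using lemmaB[OF conj_root[OF r1(1)] rb r1(3)] d_def by simp
    show ?thesis
    proof (cases "part c")
      case True
      have "(2 * \<i>) * (\<Sum>i<d. complex_of_real (vdm_matrix col part i c) * Gc f \<beta> i)
          = (\<Sum>i<d. \<gamma>^i * Gc f \<beta> i - (cnj \<gamma>)^i * Gc f \<beta> i)"
        unfolding sum_distrib_left
        by (rule sum.cong[OF refl]) (simp add: vdm_complex True \<gamma>_def field_simps)
      then have "(2 * \<i>) * (\<Sum>i<d. complex_of_real (vdm_matrix col part i c) * Gc f \<beta> i) = 0"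
        using S1 S2 by (simp add: sum_subtractf)
      then show ?thesis by simp
    next
      case False
      have "2 * (\<Sum>i<d. complex_of_real (vdm_matrix col part i c) * Gc f \<beta> i)
          = (\<Sum>i<d. \<gamma>^i * Gc f \<beta> i + (cnj \<gamma>)^i * Gc f \<beta> i)"
        unfolding sum_distrib_left
        by (rule sum.cong[OF refl]) (simp add: vdm_complex False \<gamma>_def field_simps)
      then have "2 * (\<Sum>i<d. complex_of_real (vdm_matrix col part i c) * Gc f \<beta> i) = 0"
        using S1 S2 by (simp add: sum.distrib)
      then show ?thesis by simp
    qed
  qed
  have "(\<Sum>i<d. complex_of_int (\<sigma> i) * Gc f \<beta> i)
      = (\<Sum>i<d. (\<Sum>c\<in>C. complex_of_real (vdm_matrix col part i c) * complex_of_real (u c)) * Gc f \<beta> i)"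
  proof (rule sum.cong[OF refl])
    fix i assume "i \<in> {..<d}"
    then have "complex_of_real (real_of_int (\<sigma> i)) = complex_of_real (\<Sum>c\<in>C. vdm_matrix col part i c * u c)"
      using rep d_def by auto
    then show "complex_of_int (\<sigma> i) * Gc f \<beta> i = (\<Sum>c\<in>C. complex_of_real (vdm_matrix col part i c) * complex_of_real (u c)) * Gc f \<beta> i"
      by simp
  qed
  also have "\<dots> = (\<Sum>c\<in>C. complex_of_real (u c) * (\<Sum>i<d. complex_of_real (vdm_matrix col part i c) * Gc f \<beta> i))"
    by (simp add: sum_distrib_left sum_distrib_right mult_ac sum.swap[of _ C])
  also have "\<dots> = 0" using colsum by simp
  finally have tot: "(\<Sum>i<d. complex_of_int (\<sigma> i) * Gc f \<beta> i) = 0" .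
  define a where "a = (\<lambda>j. \<Sum>i<d - j. \<sigma> i * coeff f (i+1+j))"
  have "(\<Sum>i<d. complex_of_int (\<sigma> i) * Gc f \<beta> i)
      = (\<Sum>i<d. \<Sum>j<d - i. complex_of_int (\<sigma> i * coeff f (i+1+j)) * \<beta>^j)"
    by (simp add: Gc_def d_def sum_distrib_left mult_ac)
  also have "\<dots> = (\<Sum>j<d. \<Sum>i<d - j. complex_of_int (\<sigma> i * coeff f (i+1+j)) * \<beta>^j)"
    by (rule swap_tri)
  also have "\<dots> = (\<Sum>j<d. complex_of_int (a j) * \<beta>^j)"
    by (simp add: a_def sum_distrib_right)
  finally have "(\<Sum>j<degree f. complex_of_int (a j) * \<beta>^j) = 0" using tot d_def by simp
  then have "\<forall>j<degree f. a j = 0" using lemmaA[OF irr rb] by blast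
  then show ?thesis using lemmaC[OF lc] unfolding a_def d_def by blast
qed

lemma separation:
  fixes col :: "nat \<Rightarrow> complex" and part :: "nat \<Rightarrow> bool"
  assumes vc: "vdm_columns f n col part" and k0: "k0 < degree f" and c: "c < degree f"
    and blk: "(k0 < n) \<noteq> (c < n)"
  shows "col c \<noteq> col k0 \<and> col c \<noteq> cnj (col k0)"
proof -
  define \<gamma> where "\<gamma> = col k0"
  have root: "poly (map_poly complex_of_int f) \<gamma> = 0" using vc k0 unfolding vdm_columns_def \<gamma>_def by blast
  show ?thesis
  proof (cases "Im \<gamma> = 0")
    case True
    then have cg: "cnj \<gamma> = \<gamma>" by (simp add: complex_eq_iff)
    have "card {k. k < degree f \<and> col k = \<gamma>} = 1" using vc root True unfolding vdm_columns_def by blast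
    then obtain k where k: "{k. k < degree f \<and> col k = \<gamma>} = {k}" by (rule card_1_singletonE)
    have "k0 \<in> {k. k < degree f \<and> col k = \<gamma>}" using k0 \<gamma>_def by simp
    then have "k0 = k" using k by auto
    moreover have "col c = \<gamma> \<Longrightarrow> c = k" using k c by blast
    ultimately show ?thesis using blk cg \<gamma>_def by auto
  next
    case False
    then obtain k1 k2 where kk: "{k. k < degree f \<and> (col k = \<gamma> \<or> col k = cnj \<gamma>)} = {k1, k2}"
      and iff: "(k1 < n \<longleftrightarrow> k2 < n)"
      using vc root unfolding vdm_columns_def by blast
    have "k0 \<in> {k1, k2}" using kk k0 \<gamma>_def by blast
    moreover have "col c = \<gamma> \<or> col c = cnj \<gamma> \<Longrightarrow> c \<in> {k1, k2}" using kk c by blast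
    ultimately show ?thesis using blk iff \<gamma>_def by auto
  qed
qed

lemma inv_apply:
  fixes A B :: "nat \<Rightarrow> nat \<Rightarrow> real"
  assumes AB: "\<forall>i<d. \<forall>j<d. (\<Sum>k<d. A i k * B k j) = (if i = j then 1 else 0)" and i: "i < d"
  shows "(\<Sum>k<d. A i k * (\<Sum>l<d. B k l * v l)) = v i"
proof -
  have "(\<Sum>k<d. A i k * (\<Sum>l<d. B k l * v l)) = (\<Sum>k<d. \<Sum>l<d. A i k * B k l * v l)"
    by (simp add: sum_distrib_left mult_ac)
  also have "\<dots> = (\<Sum>l<d. \<Sum>k<d. A i k * B k l * v l)" by (rule sum.swap)
  also have "\<dots> = (\<Sum>l<d. (\<Sum>k<d. A i k * B k l) * v l)" by (simp add: sum_distrib_right)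
  also have "\<dots> = (\<Sum>l<d. (if i = l then 1 else 0) * v l)"
    using AB i by (intro sum.cong) auto
  also have "\<dots> = (\<Sum>l<d. if i = l then v l else 0)" by (intro sum.cong) auto
  also have "\<dots> = v i" using i by simp
  finally show ?thesis .
qed

lemma inj_core:
  fixes f :: "int poly" and col :: "nat \<Rightarrow> complex" and part :: "nat \<Rightarrow> bool"
    and L :: "nat \<Rightarrow> nat \<Rightarrow> real" and r r' :: "nat \<Rightarrow> int"
  assumes lc: "lead_coeff f = 1"
    and irr: "irreducible (map_poly (of_int :: int \<Rightarrow> rat) f)"
    and vc: "vdm_columns f n col part"
    and YL: "\<forall>i < degree f. \<forall>j < degree f.
           (\<Sum>k < degree f. vdm_matrix col part i k * L k j) = (if i = j then 1 else 0)"
    and K: "K \<subseteq> {..<degree f}" and k0: "k0 \<in> K"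
    and sep: "\<forall>c\<in>{..<degree f} - K. (k0 < n) \<noteq> (c < n)"
    and eq: "\<forall>i\<in>K. (\<Sum>k<degree f. L i k * of_int (r k)) = (\<Sum>k<degree f. L i k * of_int (r' k))"
  shows "\<forall>i<degree f. (\<Sum>k<degree f. L i k * of_int (r k)) = (\<Sum>k<degree f. L i k * of_int (r' k))"
proof -
  define d where "d = degree f"
  define \<sigma> where "\<sigma> = (\<lambda>k. r k - r' k)"
  define u where "u = (\<lambda>i. \<Sum>k<d. L i k * of_int (\<sigma> k))"
  have u_eq: "u i = (\<Sum>k<d. L i k * of_int (r k)) - (\<Sum>k<d. L i k * of_int (r' k))" for i
    by (simp add: u_def \<sigma>_def sum_subtractf right_diff_distrib)
  have u0: "u i = 0" if "i \<in> K" for i using eq that u_eq d_def by simp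
  have rep: "\<forall>i<degree f. real_of_int (\<sigma> i) = (\<Sum>c\<in>{..<degree f} - K. vdm_matrix col part i c * u c)"
  proof (intro allI impI)
    fix i assume i: "i < degree f"
    have "real_of_int (\<sigma> i) = (\<Sum>k<d. vdm_matrix col part i k * u k)"
      unfolding u_def using inv_apply[OF YL[folded d_def] i[folded d_def], of "\<lambda>k. real_of_int (\<sigma> k)"] by simp
    also have "\<dots> = (\<Sum>c\<in>{..<degree f} - K. vdm_matrix col part i c * u c)"
      unfolding d_def by (rule sum.mono_neutral_right) (auto simp: u0)
    finally show "real_of_int (\<sigma> i) = (\<Sum>c\<in>{..<degree f} - K. vdm_matrix col part i c * u c)" .
  qed
  have k0d: "k0 < degree f" using K k0 by auto
  have rb: "poly (map_poly complex_of_int f) (col k0) = 0" using vc k0d unfolding vdm_columns_def by blast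
  have cols: "\<forall>c\<in>{..<degree f} - K. poly (map_poly complex_of_int f) (col c) = 0 \<and> col c \<noteq> col k0 \<and> cnj (col c) \<noteq> col k0"
  proof
    fix c assume c: "c \<in> {..<degree f} - K"
    have "col c \<noteq> col k0 \<and> col c \<noteq> cnj (col k0)"
      using separation[OF vc k0d, of c] c sep by auto
    moreover have "poly (map_poly complex_of_int f) (col c) = 0" using vc c unfolding vdm_columns_def by blast
    ultimately show "poly (map_poly complex_of_int f) (col c) = 0 \<and> col c \<noteq> col k0 \<and> cnj (col c) \<noteq> col k0"
      by (metis complex_cnj_cnj)
  qed
  have "\<forall>i<degree f. \<sigma> i = 0"
    by (rule lemmaD[OF lc irr rb _ cols rep]) auto
  then have "u i = 0" for i unfolding u_def d_def by simp
  then show ?thesis using u_eq d_def by simp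
qed

lemma theta_exists:
  fixes f :: "int poly" and \<gamma> :: complex
  assumes irr: "irreducible (map_poly (of_int::int\<Rightarrow>rat) f)"
    and root: "poly (map_poly complex_of_int f) \<gamma> = 0"
  obtains s where "\<And>q::nat \<Rightarrow> int. (\<Sum>i<degree f. of_int (q i) * (Re (\<gamma>^i) + s * Im (\<gamma>^i))) = 0
      \<Longrightarrow> \<forall>i<degree f. q i = 0"
proof -
  define d where "d = degree f"
  define Qc where "Qc = (\<lambda>q::nat \<Rightarrow> int. \<Sum>i<d. complex_of_int (q i) * \<gamma>^i)"
  define B where "B = range (\<lambda>xs::int list. - Re (Qc (\<lambda>i. xs ! i)) / Im (Qc (\<lambda>i. xs ! i)))"
  have "countable B" unfolding B_def by simp
  then have "B \<noteq> UNIV" using uncountable_UNIV_real by auto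
  then obtain s where s: "s \<notin> B" by auto
  have "\<forall>i<degree f. q i = 0" if z: "(\<Sum>i<degree f. of_int (q i) * (Re (\<gamma>^i) + s * Im (\<gamma>^i))) = 0"
    for q :: "nat \<Rightarrow> int"
  proof -
    have ReQ: "Re (Qc q) = (\<Sum>i<d. of_int (q i) * Re (\<gamma>^i))" unfolding Qc_def by (simp add: Re_sum)
    have ImQ: "Im (Qc q) = (\<Sum>i<d. of_int (q i) * Im (\<gamma>^i))" unfolding Qc_def by (simp add: Im_sum)
    have "(\<Sum>i<d. of_int (q i) * (Re (\<gamma>^i) + s * Im (\<gamma>^i)))
        = (\<Sum>i<d. of_int (q i) * Re (\<gamma>^i)) + s * (\<Sum>i<d. of_int (q i) * Im (\<gamma>^i))"
      unfolding sum_distrib_left sum.distrib[symmetric]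
      by (rule sum.cong[OF refl]) (simp add: algebra_simps)
    then have "Re (Qc q) + s * Im (Qc q) = 0"
      using z unfolding ReQ ImQ d_def by simp
    show ?thesis
    proof (cases "Qc q = 0")
      case True
      then show ?thesis using lemmaA[OF irr root] unfolding Qc_def d_def by blast
    next
      case False
      have "Im (Qc q) \<noteq> 0"
      proof
        assume "Im (Qc q) = 0"
        then have "Re (Qc q) = 0" using \<open>Re (Qc q) + s * Im (Qc q) = 0\<close> by simp
        then show False using False \<open>Im (Qc q) = 0\<close> by (simp add: complex_eq_iff)
      qed
      then have "s = - Re (Qc q) / Im (Qc q)" using \<open>Re (Qc q) + s * Im (Qc q) = 0\<close>
        by (simp add: field_simps)
      moreover have "Qc (\<lambda>i. map q [0..<d] ! i) = Qc q" unfolding Qc_def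
        by (intro sum.cong) auto
      ultimately have "s = (\<lambda>xs::int list. - Re (Qc (\<lambda>i. xs ! i)) / Im (Qc (\<lambda>i. xs ! i))) (map q [0..<d])"
        by simp
      then have "s \<in> B" unfolding B_def by (rule image_eqI) simp
      then show ?thesis using s by blast
    qed
  qed
  then show ?thesis using that by blast
qed

lemma indep_from:
  fixes \<theta> :: "nat \<Rightarrow> real"
  assumes H: "\<And>q::nat \<Rightarrow> int. (\<Sum>i<d. of_int (q i) * \<theta> i) = 0 \<Longrightarrow> \<forall>i<d. q i = 0"
  shows "inj_on \<theta> {..<d}" and "\<not> module.dependent (\<lambda>r. (*) (real_of_int r)) (\<theta> ` {..<d})"
proof -
  show inj: "inj_on \<theta> {..<d}"
  proof (rule inj_onI, rule ccontr)
    fix i j assume i: "i \<in> {..<d}" and j: "j \<in> {..<d}" and e: "\<theta> i = \<theta> j" and ne: "i \<noteq> j"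
    define q :: "nat \<Rightarrow> int" where "q = (\<lambda>k. (if k = i then 1 else 0) - (if k = j then 1 else 0))"
    have "(\<Sum>k<d. of_int (q k) * \<theta> k) = (\<Sum>k<d. (if k = i then \<theta> k else 0) - (if k = j then \<theta> k else 0))"
      by (rule sum.cong[OF refl]) (auto simp: q_def)
    also have "\<dots> = (\<Sum>k<d. (if k = i then \<theta> k else 0)) - (\<Sum>k<d. (if k = j then \<theta> k else 0))"
      by (rule sum_subtractf)
    also have "\<dots> = 0" using i j e by simp
    finally have "\<forall>k<d. q k = 0" using H by blast
    then show False using i ne unfolding q_def by auto
  qed
  interpret m: Modules.module "(\<lambda>r. (*) (real_of_int r))"
    by (simp add: Modules.module.intro distrib_left mult.commute)
  show "\<not> m.dependent (\<theta> ` {..<d})"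
  proof
    assume "m.dependent (\<theta> ` {..<d})"
    then obtain t u where t: "finite t" "t \<subseteq> \<theta> ` {..<d}" and su: "(\<Sum>v\<in>t. real_of_int (u v) * v) = 0"
      and v: "\<exists>v\<in>t. u v \<noteq> 0"
      unfolding m.dependent_explicit by blast
    define I where "I = {k. k < d \<and> \<theta> k \<in> t}"
    have tI: "t = \<theta> ` I" using t(2) unfolding I_def by auto
    have injI: "inj_on \<theta> I" using inj unfolding I_def by (rule inj_on_subset) auto
    define q where "q = (\<lambda>k. if \<theta> k \<in> t then u (\<theta> k) else 0)"
    have "(\<Sum>k<d. of_int (q k) * \<theta> k) = (\<Sum>k\<in>I. real_of_int (u (\<theta> k)) * \<theta> k)"
      unfolding q_def I_def by (rule sum.mono_neutral_cong_right) auto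
    also have "\<dots> = (\<Sum>v\<in>t. real_of_int (u v) * v)"
      unfolding tI using sum.reindex[OF injI, of "\<lambda>v. real_of_int (u v) * v"] by simp
    also have "\<dots> = 0" by (rule su)
    finally have "\<forall>k<d. q k = 0" using H by blast
    moreover obtain w where "w \<in> t" "u w \<noteq> 0" using v by blast
    moreover then obtain k where "k < d" "w = \<theta> k" using t(2) by auto
    ultimately show False unfolding q_def by auto
  qed
qed

lemma dens_core:
  fixes f :: "int poly" and col :: "nat \<Rightarrow> complex" and part :: "nat \<Rightarrow> bool"
    and L :: "nat \<Rightarrow> nat \<Rightarrow> real" and y :: "nat \<Rightarrow> real" and \<epsilon> :: real
  assumes irr: "irreducible (map_poly (of_int :: int \<Rightarrow> rat) f)"
    and vc: "vdm_columns f n col part"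
    and LY: "\<forall>i < degree f. \<forall>j < degree f.
           (\<Sum>k < degree f. L i k * vdm_matrix col part k j) = (if i = j then 1 else 0)"
    and n1: "1 \<le> n" and nd: "n < degree f" and \<epsilon>: "\<epsilon> > 0"
  shows "\<exists>r::nat \<Rightarrow> int. sqrt (\<Sum>i<degree f - n. ((\<Sum>k<degree f. L (n+i) k * of_int (r k)) - y i)^2) < \<epsilon>"
proof -
  define d where "d = degree f"
  define Y where "Y = vdm_matrix col part"
  have LY': "\<forall>i<d. \<forall>j<d. (\<Sum>k<d. L i k * Y k j) = (if i = j then 1 else 0)"
    using LY unfolding d_def Y_def by blast
  define \<gamma> where "\<gamma> = col 0"
  have d0: "0 < d" using nd d_def by simp
  have root: "poly (map_poly complex_of_int f) \<gamma> = 0"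
    using vc d0 unfolding vdm_columns_def \<gamma>_def d_def by blast
  obtain s where s: "\<And>q::nat \<Rightarrow> int. (\<Sum>i<degree f. of_int (q i) * (Re (\<gamma>^i) + s * Im (\<gamma>^i))) = 0
      \<Longrightarrow> \<forall>i<degree f. q i = 0"
    using theta_exists[OF irr root] by blast
  define \<theta> where "\<theta> = (\<lambda>i. Re (\<gamma>^i) + s * Im (\<gamma>^i))"
  have H: "\<And>q::nat \<Rightarrow> int. (\<Sum>i<d. of_int (q i) * \<theta> i) = 0 \<Longrightarrow> \<forall>i<d. q i = 0"
    using s unfolding \<theta>_def d_def by blast
  note ind = indep_from[OF H]
  obtain a where a1: "\<forall>i<d. \<theta> i = (\<Sum>k<d. Y i k * a k)" and a2: "\<forall>k. n \<le> k \<longrightarrow> a k = 0"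
  proof (cases "Im \<gamma> = 0")
    case True
    have np: "\<not> part 0" using vc root True d0 unfolding vdm_columns_def \<gamma>_def d_def by blast
    define a :: "nat \<Rightarrow> real" where "a = (\<lambda>k. if k = 0 then 1 else 0)"
    have "\<theta> i = (\<Sum>k<d. Y i k * a k)" if "i < d" for i
    proof -
      have "(\<Sum>k<d. Y i k * a k) = (\<Sum>k<d. if k = 0 then Y i k else 0)"
        by (rule sum.cong[OF refl]) (simp add: a_def)
      also have "\<dots> = Y i 0" using d0 by simp
      also have "\<dots> = Re (\<gamma>^i)" using np unfolding Y_def vdm_matrix_def \<gamma>_def by simp
      finally show ?thesis unfolding \<theta>_def using True by simp
    qed
    moreover have "\<forall>k. n \<le> k \<longrightarrow> a k = 0" using n1 unfolding a_def by auto
    ultimately show ?thesis using that by blast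
  next
    case False
    obtain k1 k2 where k: "k1 < d" "k2 < d" "k1 \<noteq> k2"
      and kk: "{k. k < d \<and> (col k = \<gamma> \<or> col k = cnj \<gamma>)} = {k1, k2}"
      and cc: "col k1 = col k2" and pp: "part k1 \<noteq> part k2" and iff: "(k1 < n \<longleftrightarrow> k2 < n)"
      using vc root False unfolding vdm_columns_def d_def by blast
    have "0 \<in> {k1, k2}" using kk d0 \<gamma>_def by blast
    then have c1: "col k1 = \<gamma>" and kn: "k1 < n" "k2 < n" using cc \<gamma>_def iff n1 by auto
    define kre where "kre = (if part k1 then k2 else k1)"
    define kim where "kim = (if part k1 then k1 else k2)"
    have props: "\<not> part kre" "part kim" "col kre = \<gamma>" "col kim = \<gamma>" "kre \<noteq> kim"
      "kre < n" "kim < n" "kre < d" "kim < d"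
      using k c1 cc pp kn unfolding kre_def kim_def by auto
    define a :: "nat \<Rightarrow> real" where "a = (\<lambda>k. (if k = kre then 1 else 0) + (if k = kim then s else 0))"
    have "\<theta> i = (\<Sum>k<d. Y i k * a k)" if "i < d" for i
    proof -
      have "(\<Sum>k<d. Y i k * a k) = (\<Sum>k<d. (if k = kre then Y i k else 0) + (if k = kim then s * Y i k else 0))"
        by (rule sum.cong[OF refl]) (simp add: a_def algebra_simps)
      also have "\<dots> = Y i kre + s * Y i kim" using props by (simp add: sum.distrib)
      also have "\<dots> = Re (\<gamma>^i) + s * Im (\<gamma>^i)" using props unfolding Y_def vdm_matrix_def by simp
      finally show ?thesis unfolding \<theta>_def by simp
    qed
    moreover have "\<forall>k. n \<le> k \<longrightarrow> a k = 0" using props unfolding a_def by auto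
    ultimately show ?thesis using that by blast
  qed
  have La: "(\<Sum>k<d. L i k * \<theta> k) = a i" if "i < d" for i
  proof -
    have "(\<Sum>k<d. L i k * \<theta> k) = (\<Sum>k<d. L i k * (\<Sum>l<d. Y k l * a l))"
      using a1 by (intro sum.cong) auto
    also have "\<dots> = a i" by (rule inv_apply[OF LY' that])
    finally show ?thesis .
  qed
  define M where "M = (\<Sum>i<d. \<Sum>k<d. \<bar>L i k\<bar>)"
  have M0: "M \<ge> 0" unfolding M_def by (intro sum_nonneg) auto
  define \<delta> where "\<delta> = \<epsilon> / (real d * M + 1)"
  have dM0: "real d * M + 1 > 0" using M0 by (simp add: add_nonneg_pos)
  have \<delta>0: "\<delta> > 0" unfolding \<delta>_def using \<epsilon> dM0 by simp
  define w where "w = (\<lambda>k. if n \<le> k then y (k - n) else 0)"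
  define p where "p = (\<lambda>i. \<Sum>l<d. Y i l * w l)"
  obtain t h where th: "\<And>i. i < d \<Longrightarrow> \<bar>t * \<theta> i - of_int (h i) - (- p i)\<bar> < \<delta>"
    using Kronecker_thm_1[where \<alpha>="\<lambda>i. - p i" and \<theta>=\<theta> and n=d, OF ind(2) ind(1) \<delta>0] by blast
  define e where "e = (\<lambda>k. of_int (h k) - p k - t * \<theta> k)"
  have eb: "\<bar>e k\<bar> \<le> \<delta>" if "k < d" for k
    using th[OF that] unfolding e_def by (simp add: abs_minus_commute)
  have mainj: "(\<Sum>k<d. L j k * of_int (h k)) = w j + t * a j + (\<Sum>k<d. L j k * e k)" if j: "j < d" for j
  proof -
    have "(\<Sum>k<d. L j k * of_int (h k)) = (\<Sum>k<d. L j k * p k + t * (L j k * \<theta> k) + L j k * e k)"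
      by (rule sum.cong[OF refl]) (simp add: e_def algebra_simps)
    also have "\<dots> = (\<Sum>k<d. L j k * p k) + t * (\<Sum>k<d. L j k * \<theta> k) + (\<Sum>k<d. L j k * e k)"
      by (simp add: sum.distrib sum_distrib_left)
    also have "(\<Sum>k<d. L j k * p k) = w j" unfolding p_def by (rule inv_apply[OF LY' j])
    finally show ?thesis using La[OF j] by simp
  qed
  have ebound: "\<bar>\<Sum>k<d. L j k * e k\<bar> \<le> M * \<delta>" if j: "j < d" for j
  proof -
    have "\<bar>\<Sum>k<d. L j k * e k\<bar> \<le> (\<Sum>k<d. \<bar>L j k * e k\<bar>)" by (rule sum_abs)
    also have "\<dots> \<le> (\<Sum>k<d. \<bar>L j k\<bar> * \<delta>)"
      by (intro sum_mono) (simp add: abs_mult eb mult_left_mono)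
    also have "\<dots> = (\<Sum>k<d. \<bar>L j k\<bar>) * \<delta>" by (simp add: sum_distrib_right)
    also have "(\<Sum>k<d. \<bar>L j k\<bar>) \<le> M"
      unfolding M_def using j by (intro member_le_sum[where f = "\<lambda>i. \<Sum>k<d. \<bar>L i k\<bar>"]) (auto intro: sum_nonneg)
    then have "(\<Sum>k<d. \<bar>L j k\<bar>) * \<delta> \<le> M * \<delta>" using \<delta>0 by (simp add: mult_right_mono)
    finally show ?thesis by simp
  qed
  define v where "v = (\<lambda>i. (\<Sum>k<d. L (n+i) k * of_int (h k)) - y i)"
  have vb: "\<bar>v i\<bar> \<le> M * \<delta>" if "i < d - n" for i
  proof -
    have "n + i < d" using that by simp
    moreover have "w (n + i) = y i" "a (n + i) = 0" using a2 unfolding w_def by auto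
    ultimately have "v i = (\<Sum>k<d. L (n+i) k * e k)" unfolding v_def using mainj by simp
    then show ?thesis using ebound \<open>n + i < d\<close> by simp
  qed
  have "sqrt (\<Sum>i<d - n. (v i)^2) = L2_set v {..<d - n}" by (simp add: L2_set_def)
  also have "\<dots> \<le> (\<Sum>i<d - n. \<bar>v i\<bar>)" by (rule L2_set_le_sum_abs)
  also have "\<dots> \<le> (\<Sum>i<d - n. M * \<delta>)" by (intro sum_mono vb) simp
  also have "\<dots> = real (d - n) * M * \<delta>" by simp
  also have "\<dots> \<le> real d * M * \<delta>" using M0 \<delta>0 by (intro mult_right_mono mult_right_mono) auto
  also have "\<dots> < \<epsilon>"
  proof -
    have "real d * M * \<delta> = \<epsilon> * (real d * M) / (real d * M + 1)" unfolding \<delta>_def by simp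
    also have "\<dots> < \<epsilon>" using dM0 \<epsilon> by (simp add: divide_less_eq)
    finally show ?thesis .
  qed
  finally show ?thesis unfolding v_def d_def by blast
qed

theorem theorem1:
  fixes f :: "int poly" and n :: nat
    and col :: "nat \<Rightarrow> complex" and part :: "nat \<Rightarrow> bool"
    and L :: "nat \<Rightarrow> nat \<Rightarrow> real"
  assumes "lead_coeff f = 1"
    and "irreducible (map_poly (of_int :: int \<Rightarrow> rat) f)"
    and "1 \<le> n" and "n < degree f"
    and "vdm_columns f n col part"
    and "\<forall>i < degree f. \<forall>j < degree f.
           (\<Sum>k < degree f. L i k * vdm_matrix col part k j) = (if i = j then 1 else 0)"
    and "\<forall>i < degree f. \<forall>j < degree f.
           (\<Sum>k < degree f. vdm_matrix col part i k * L k j) = (if i = j then 1 else 0)"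
  shows "generic_cps (degree f) n L"
proof -
  define d where "d = degree f"
  define X where "X = (\<lambda>r::nat \<Rightarrow> int. (\<lambda>i. if i < d then (\<Sum>k<d. L i k * of_int (r k)) else 0))"
  have lat: "cps_lattice d L = range X" unfolding cps_lattice_def X_def by auto
  have injgen: "X r = X r'" if K: "K \<subseteq> {..<d}" and k0: "k0 \<in> K"
    and sep: "\<forall>c\<in>{..<d} - K. (k0 < n) \<noteq> (c < n)"
    and eq: "\<forall>i\<in>K. X r i = X r' i" for K k0 r r'
  proof -
    have eq': "\<forall>i\<in>K. (\<Sum>k<degree f. L i k * of_int (r k)) = (\<Sum>k<degree f. L i k * of_int (r' k))"
    proof
      fix i assume i: "i \<in> K"
      then have "i < degree f" using K d_def by auto
      then show "(\<Sum>k<degree f. L i k * of_int (r k)) = (\<Sum>k<degree f. L i k * of_int (r' k))"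
        using eq i unfolding X_def d_def by auto
    qed
    have "\<forall>i<degree f. (\<Sum>k<degree f. L i k * of_int (r k)) = (\<Sum>k<degree f. L i k * of_int (r' k))"
      by (rule inj_core[OF assms(1,2,5,7), of K k0]) (use K k0 sep eq' d_def in auto)
    then show ?thesis unfolding X_def d_def by auto
  qed
  have i1: "inj_on (pi_par n) (cps_lattice d L)"
    unfolding lat
  proof (rule inj_onI, elim rangeE)
    fix x x' r r' assume e: "pi_par n x = pi_par n x'" and x: "x = X r" and x': "x' = X r'"
    have "\<forall>i\<in>{..<n}. X r i = X r' i"
    proof
      fix i assume "i \<in> {..<n}"
      then show "X r i = X r' i" using fun_cong[OF e, of i] x x' unfolding pi_par_def by simp
    qed
    then have "X r = X r'" by (intro injgen[of "{..<n}" 0]) (use assms(3,4) d_def in auto)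
    then show "x = x'" using x x' by simp
  qed
  have i2: "inj_on (pi_perp d n) (cps_lattice d L)"
    unfolding lat
  proof (rule inj_onI, elim rangeE)
    fix x x' r r' assume e: "pi_perp d n x = pi_perp d n x'" and x: "x = X r" and x': "x' = X r'"
    have "\<forall>i\<in>{n..<d}. X r i = X r' i"
    proof
      fix i assume i: "i \<in> {n..<d}"
      have "i - n < d - n" "n + (i - n) = i" using i by auto
      then show "X r i = X r' i" using fun_cong[OF e, of "i - n"] x x' unfolding pi_perp_def by simp
    qed
    then have "X r = X r'" by (intro injgen[of "{n..<d}" n]) (use assms(3,4) d_def in auto)
    then show "x = x'" using x x' by simp
  qed
  have dn: "\<forall>y :: nat \<Rightarrow> real. \<forall>\<epsilon> > 0. \<exists>x \<in> cps_lattice d L.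
        sqrt (\<Sum>i < d - n. (pi_perp d n x i - y i)^2) < \<epsilon>"
  proof (intro allI impI)
    fix y :: "nat \<Rightarrow> real" and \<epsilon> :: real assume \<epsilon>: "\<epsilon> > 0"
    obtain r :: "nat \<Rightarrow> int" where r: "sqrt (\<Sum>i<degree f - n. ((\<Sum>k<degree f. L (n+i) k * of_int (r k)) - y i)^2) < \<epsilon>"
      using dens_core[OF assms(2,5,6,3,4) \<epsilon>] by blast
    have "(\<Sum>i < d - n. (pi_perp d n (X r) i - y i)^2)
        = (\<Sum>i<degree f - n. ((\<Sum>k<degree f. L (n+i) k * of_int (r k)) - y i)^2)"
      unfolding d_def by (rule sum.cong[OF refl]) (simp add: pi_perp_def X_def d_def)
    then show "\<exists>x \<in> cps_lattice d L. sqrt (\<Sum>i < d - n. (pi_perp d n x i - y i)^2) < \<epsilon>"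
      using r lat by (metis rangeI)
  qed
  show ?thesis unfolding generic_cps_def d_def[symmetric] using i1 i2 dn by blast
qed

end
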